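(* In a public goods economy (as in the context), if an outcome $\mathbf{a}$ is in the core, then the set $\mathbf{D}_{\mathbf{a}}=\{\mathbf{a}'\in[0,1]^n:\mathbf{u}(\mathbf{a})\ge\mathbf{u}(\mathbf{a}')\}$ is path connected.
   Context: Agents $N=\{1,\dots,n\}$; outcomes are vectors in $[0,1]^n$. Vector orderings: $\mathbf{x}\ge\mathbf{y}$ coordinatewise; $\mathbf{x}>\mathbf{y}$ strict in every coordinate; $\mathbf{x}\gneq\mathbf{y}$ means $\mathbf{x}\ge\mathbf{y}$ and $x_j>y_j$ for some $j$. For $C\subseteq N$, $\mathbf{v}_C$ is the restriction of $\mathbf{v}$ to coordinates in $C$. The utility function $\mathbf{u}:[0,1]^n\to[0,1]^n$ is continuous, concave, and has positive externalities: whenever $\mathbf{a}\gneq\mathbf{a}'$ and $a_i=a'_i$, then $u_i(\mathbf{a})>u_i(\mathbf{a}')$. A coalition is a nonempty $C\subseteq N$; $\mathbf{a}'$ is a deviation from $\mathbf{a}$ for $C$ if $\mathbf{a}'_{N\setminus C}=\mathbf{0}$ and $\mathbf{u}_C(\mathbf{a}')>\mathbf{u}_C(\mathbf{a})$. The core is the set of outcomes from which no coalition has a deviation. Path connected: any two points of the set are joined by a continuous path $f:[0,1]\to[0,1]^n$ lying in the set. *)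

theory Defs
  imports "HOL-Analysis.Analysis"
begin

text \<open>Agents are the elements of the finite index type 'n; outcomes are vectors in [0,1]^n.\<close>

definition unit_cube :: "(real ^ 'n) set" where
  "unit_cube = {x. \<forall>i. 0 \<le> x $ i \<and> x $ i \<le> 1}"

definition vec_gneq :: "real ^ 'n \<Rightarrow> real ^ 'n \<Rightarrow> bool" where
  "vec_gneq a b \<longleftrightarrow> (\<forall>i. b $ i \<le> a $ i) \<and> (\<exists>j. b $ j < a $ j)"

definition public_goods_utility :: "(real ^ 'n \<Rightarrow> real ^ 'n) \<Rightarrow> bool" where
  "public_goods_utility u \<longleftrightarrow>
     u ` unit_cube \<subseteq> unit_cube \<and>
     continuous_on unit_cube u \<and>
     (\<forall>i. concave_on unit_cube (\<lambda>x. u x $ i)) \<and>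
     (\<forall>a\<in>unit_cube. \<forall>a'\<in>unit_cube. \<forall>i.
        vec_gneq a a' \<and> a $ i = a' $ i \<longrightarrow> u a' $ i < u a $ i)"

definition is_deviation ::
  "(real ^ 'n \<Rightarrow> real ^ 'n) \<Rightarrow> 'n set \<Rightarrow> real ^ 'n \<Rightarrow> real ^ 'n \<Rightarrow> bool" where
  "is_deviation u C a a' \<longleftrightarrow>
     a' \<in> unit_cube \<and> (\<forall>i. i \<notin> C \<longrightarrow> a' $ i = 0) \<and> (\<forall>i\<in>C. u a $ i < u a' $ i)"

definition core :: "(real ^ 'n \<Rightarrow> real ^ 'n) \<Rightarrow> (real ^ 'n) set" where
  "core u = {a \<in> unit_cube. \<forall>C. C \<noteq> {} \<longrightarrow> \<not> (\<exists>a'. is_deviation u C a a')}"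

definition dominated_set :: "(real ^ 'n \<Rightarrow> real ^ 'n) \<Rightarrow> real ^ 'n \<Rightarrow> (real ^ 'n) set" where
  "dominated_set u a = {a' \<in> unit_cube. \<forall>i. u a' $ i \<le> u a $ i}"

end

theory Submission
  imports Defs
begin

definition vmin :: "real ^ 'n \<Rightarrow> real ^ 'n \<Rightarrow> real ^ 'n" where
  "vmin x y = (\<chi> i. min (x $ i) (y $ i))"

lemma vmin_nth[simp]: "vmin x y $ i = min (x $ i) (y $ i)"
  by (simp add: vmin_def)

lemma continuous_on_vmin: "continuous_on S (\<lambda>y. vmin b y)"
  unfolding vmin_def by (intro continuous_intros)


definition simplexS :: "('n::finite) set \<Rightarrow> (real ^ 'n) set" where
  "simplexS S = {w. (\<forall>i. 0 \<le> w $ i) \<and> (\<forall>i. i \<notin> S \<longrightarrow> w $ i = 0) \<and> sum (\<lambda>i. w $ i) UNIV = 1}"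

lemma simplexS_le1:
  assumes "w \<in> simplexS S" shows "w $ i \<le> 1"
proof -
  have "w $ i \<le> sum (\<lambda>i. w $ i) UNIV"
    using assms by (intro member_le_sum) (auto simp: simplexS_def)
  then show ?thesis using assms by (simp add: simplexS_def)
qed

lemma closed_simplexS: "closed (simplexS S)"
proof -
  have eq: "simplexS S = (\<Inter>i. {w. 0 \<le> w $ i}) \<inter> (\<Inter>i\<in>-S. {w. w $ i = 0}) \<inter> {w. sum (\<lambda>i. w $ i) UNIV = 1}"
    unfolding simplexS_def by auto
  have "closed {w::real^'n. sum (\<lambda>i. w $ i) UNIV = 1}"
    by (intro closed_Collect_eq continuous_intros)
  moreover have "closed {w::real^'n. w $ i = 0}" for i
    by (intro closed_Collect_eq continuous_intros)
  ultimately show ?thesis unfolding eq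
    by (intro closed_Int closed_INT ballI closed_halfspace_component_ge_cart) auto
qed

lemma bounded_simplexS: "bounded (simplexS S)"
  unfolding bounded_iff
proof (intro exI ballI)
  fix w assume w: "w \<in> simplexS S"
  have "norm w \<le> sum (\<lambda>i. \<bar>w$i\<bar>) UNIV" by (rule norm_le_l1_cart)
  also have "\<dots> = 1" using w by (simp add: simplexS_def)
  finally show "norm w \<le> 1" .
qed

lemma compact_simplexS: "compact (simplexS S)"
  using closed_simplexS bounded_simplexS compact_eq_bounded_closed by blast

lemma convex_simplexS: "convex (simplexS (S::('n::finite) set))"
  unfolding convex_def
proof (intro ballI allI impI)
  fix x y :: "real^'n" and p q :: real
  assume x: "x \<in> simplexS S" and y: "y \<in> simplexS S" and pq: "0 \<le> p" "0 \<le> q" "p + q = 1"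
  have "sum (\<lambda>i. (p *\<^sub>R x + q *\<^sub>R y) $ i) UNIV = p * sum (\<lambda>i. x $ i) UNIV + q * sum (\<lambda>i. y $ i) UNIV"
    by (simp add: sum.distrib sum_distrib_left)
  then show "p *\<^sub>R x + q *\<^sub>R y \<in> simplexS S"
    using x y pq by (auto simp: simplexS_def)
qed

lemma axis_simplexS: "j \<in> S \<Longrightarrow> axis j 1 \<in> simplexS S"
  by (auto simp: simplexS_def axis_def)

lemma simplexS_nonzero: "w \<in> simplexS S \<Longrightarrow> \<exists>i. w $ i \<noteq> 0"
proof (rule ccontr)
  assume "w \<in> simplexS S" "\<not> (\<exists>i. w $ i \<noteq> 0)"
  then show False by (simp add: simplexS_def)
qed

lemma kkm:
  fixes S :: "('n::finite) set" and g :: "'n \<Rightarrow> real ^ 'n \<Rightarrow> real"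
  assumes Sne: "S \<noteq> {}"
    and cont: "\<And>i. i \<in> S \<Longrightarrow> continuous_on (simplexS S) (g i)"
    and face: "\<And>w i. w \<in> simplexS S \<Longrightarrow> i \<in> S \<Longrightarrow> w $ i = 0 \<Longrightarrow> g i w < 0"
    and nocommon: "\<And>w. w \<in> simplexS S \<Longrightarrow> \<exists>i\<in>S. g i w < 0"
  shows "\<exists>w\<in>simplexS S. \<forall>i\<in>S. g i w < 0"
proof (rule ccontr)
  assume "\<not> ?thesis"
  then have cover: "\<And>w. w \<in> simplexS S \<Longrightarrow> \<exists>i\<in>S. 0 \<le> g i w" by (meson not_le)
  define \<phi> where "\<phi> i w = (if i \<in> S then max 0 (- g i w) else 0)" for i w
  have phi_nn: "0 \<le> \<phi> i w" for i w by (simp add: \<phi>_def)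
  have sum_pos: "0 < sum (\<lambda>k. \<phi> k w) UNIV" if w: "w \<in> simplexS S" for w
  proof -
    obtain i where i: "i \<in> S" "g i w < 0" using nocommon[OF w] by blast
    then have "0 < \<phi> i w" by (simp add: \<phi>_def)
    also have "\<phi> i w \<le> sum (\<lambda>k. \<phi> k w) UNIV"
      by (intro member_le_sum) (auto simp: phi_nn)
    finally show ?thesis .
  qed
  define f where "f w = (\<chi> i. \<phi> i w / sum (\<lambda>k. \<phi> k w) UNIV)" for w
  have contphi: "continuous_on (simplexS S) (\<phi> i)" for i
    unfolding \<phi>_def[abs_def]
    by (cases "i \<in> S") (auto intro!: continuous_intros cont)
  have "continuous_on (simplexS S) f"
    unfolding f_def
    by (intro continuous_intros contphi continuous_on_sum) (use sum_pos in force)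
  moreover have "f \<in> simplexS S \<rightarrow> simplexS S"
  proof
    fix w assume w: "w \<in> simplexS S"
    have "sum (\<lambda>i. f w $ i) UNIV = sum (\<lambda>k. \<phi> k w) UNIV / sum (\<lambda>k. \<phi> k w) UNIV"
      unfolding f_def vec_lambda_beta by (rule sum_divide_distrib[symmetric])
    also have "\<dots> = 1" using sum_pos[OF w] by simp
    finally show "f w \<in> simplexS S"
      unfolding simplexS_def using sum_pos[OF w] by (auto simp: f_def \<phi>_def)
  qed
  ultimately obtain w where w: "w \<in> simplexS S" "f w = w"
    using brouwer[OF compact_simplexS convex_simplexS] axis_simplexS Sne by blast
  obtain i where i: "i \<in> S" "0 \<le> g i w" using cover[OF w(1)] by blast
  then have "\<phi> i w = 0" by (simp add: \<phi>_def)
  then have "w $ i = 0" using w(2) by (metis div_0 f_def vec_lambda_beta)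
  then have "g i w < 0" using face[OF w(1) i(1)] by simp
  then show False using i by simp
qed


primrec Fcat :: "(nat \<Rightarrow> real \<Rightarrow> 'a::real_normed_vector) \<Rightarrow> (nat \<Rightarrow> 'a) \<Rightarrow> nat \<Rightarrow> nat \<Rightarrow> real \<Rightarrow> 'a" where
  "Fcat g z 0 j = (\<lambda>t. z j)"
| "Fcat g z (Suc k) j = g j +++ Fcat g z k (Suc j)"

lemma box_norm:
  fixes v w m :: "real ^ 'n"
  assumes "\<forall>i. m $ i \<le> v $ i \<and> v $ i \<le> w $ i"
  shows "norm (w - v) \<le> norm (w - m)"
proof (rule norm_le_componentwise_cart)
  fix i
  have "m $ i \<le> v $ i" "v $ i \<le> w $ i" using assms by auto
  then show "norm ((w - v) $ i) \<le> norm ((w - m) $ i)" by simp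
qed

lemma chain_path:
  fixes z :: "nat \<Rightarrow> real ^ 'n" and g :: "nat \<Rightarrow> real \<Rightarrow> real ^ 'n" and m :: "real ^ 'n"
  assumes T: "closed T"
    and zm: "z \<longlonglongrightarrow> m"
    and gp: "\<And>k. path (g k)" and gs: "\<And>k. pathstart (g k) = z k" and gf: "\<And>k. pathfinish (g k) = z (Suc k)"
    and gT: "\<And>k. path_image (g k) \<subseteq> T"
    and box: "\<And>k t. t \<in> {0..1} \<Longrightarrow> \<forall>i. m $ i \<le> g k t $ i \<and> g k t $ i \<le> z k $ i"
  shows "path_component T (z 0) m"
proof -
  have zT: "z k \<in> T" for k using gs[of k] gT[of k] pathstart_in_path_image[of "g k"] by auto
  have zbox: "\<forall>i. m $ i \<le> z k $ i" for k using box[of 0 k] gs[of k] by (auto simp: pathstart_def)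
  have zdec: "\<forall>i. z (Suc k) $ i \<le> z k $ i" for k using box[of 1 k] gf[of k] by (auto simp: pathfinish_def)
  have P1: "path (Fcat g z k j) \<and> pathstart (Fcat g z k j) = z j \<and> pathfinish (Fcat g z k j) = z (j + k)
            \<and> path_image (Fcat g z k j) \<subseteq> T \<and>
            (\<forall>t\<in>{0..1}. \<forall>i. m $ i \<le> Fcat g z k j t $ i \<and> Fcat g z k j t $ i \<le> z j $ i)" for k j
  proof (induction k arbitrary: j)
    case 0
    then show ?case using zT zbox by (auto simp: path_def pathstart_def pathfinish_def path_image_def)
  next
    case (Suc k)
    note IH = Suc[of "Suc j"]
    have j1: "path (g j +++ Fcat g z k (Suc j))" using IH gp gf by auto
    have j2: "path_image (g j +++ Fcat g z k (Suc j)) \<subseteq> T"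
      using IH gT gf by (metis path_image_join order_trans Un_least)
    have j3: "\<forall>i. m $ i \<le> (g j +++ Fcat g z k (Suc j)) t $ i \<and> (g j +++ Fcat g z k (Suc j)) t $ i \<le> z j $ i"
      if t: "t \<in> {0..1}" for t
    proof (cases "t \<le> 1/2")
      case True
      then show ?thesis using box[of "2 * t" j] t by (auto simp: joinpaths_def)
    next
      case False
      then have t1: "2 * t - 1 \<in> {0..1}" using t by auto
      have eq: "(g j +++ Fcat g z k (Suc j)) t = Fcat g z k (Suc j) (2 * t - 1)"
        using False by (simp add: joinpaths_def)
      have h: "\<forall>i. m $ i \<le> Fcat g z k (Suc j) (2 * t - 1) $ i \<and> Fcat g z k (Suc j) (2 * t - 1) $ i \<le> z (Suc j) $ i"
        using IH t1 by blast
      show ?thesis unfolding eq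
      proof
        fix i
        have "m $ i \<le> Fcat g z k (Suc j) (2 * t - 1) $ i" "Fcat g z k (Suc j) (2 * t - 1) $ i \<le> z (Suc j) $ i"
          using h by auto
        moreover have "z (Suc j) $ i \<le> z j $ i" using zdec by blast
        ultimately show "m $ i \<le> Fcat g z k (Suc j) (2 * t - 1) $ i \<and> Fcat g z k (Suc j) (2 * t - 1) $ i \<le> z j $ i"
          by linarith
      qed
    qed
    show ?case using j1 j2 j3 IH gs by simp
  qed
  have est: "norm (Fcat g z k j t - Fcat g z k' j t) \<le> norm (z (j + k) - m)"
    if "k \<le> k'" "t \<in> {0..1}" for k k' j t
    using that
  proof (induction k arbitrary: k' j t)
    case 0
    have "norm (z j - Fcat g z k' j t) \<le> norm (z j - m)"
      by (rule box_norm) (use P1[of k' j] 0 in auto)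
    then show ?case by simp
  next
    case (Suc k)
    then obtain k1 where k1: "k' = Suc k1" "k \<le> k1" by (metis Suc_le_D Suc_le_mono)
    show ?case
    proof (cases "t \<le> 1/2")
      case True
      then show ?thesis using k1 by (simp add: joinpaths_def)
    next
      case False
      then have "2 * t - 1 \<in> {0..1}" using Suc.prems by auto
      then have "norm (Fcat g z k (Suc j) (2 * t - 1) - Fcat g z k1 (Suc j) (2 * t - 1)) \<le> norm (z (Suc j + k) - m)"
        using Suc.IH k1 by blast
      then show ?thesis using k1 False by (simp add: joinpaths_def)
    qed
  qed
  define Q where "Q k = Fcat g z k 0" for k
  have UC: "uniformly_Cauchy_on {0..1} Q"
  proof (rule uniformly_Cauchy_onI)
    fix e :: real assume e: "e > 0"
    then obtain M where M: "\<And>n. n \<ge> M \<Longrightarrow> norm (z n - m) < e"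
      using zm unfolding LIMSEQ_iff by metis
    show "\<exists>M. \<forall>x\<in>{0..1}. \<forall>m\<ge>M. \<forall>n\<ge>M. dist (Q m x) (Q n x) < e"
    proof (intro exI ballI allI impI)
      fix t :: real and p q assume t: "t \<in> {0..1}" and p: "M \<le> p" and q: "M \<le> q"
      show "dist (Q p t) (Q q t) < e"
      proof (cases "p \<le> q")
        case True
        then have "norm (Q p t - Q q t) \<le> norm (z p - m)" using est[OF True t, of 0] by (simp add: Q_def)
        then show ?thesis using M[OF p] by (simp add: dist_norm)
      next
        case False
        then have "q \<le> p" by simp
        then have "norm (Q q t - Q p t) \<le> norm (z q - m)" using est[OF _ t, of q p 0] by (simp add: Q_def)
        then show ?thesis using M[OF q] by (simp add: dist_norm norm_minus_commute)
      qed
    qed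
  qed
  have "uniformly_convergent_on {0..1} Q" using uniformly_convergent_eq_Cauchy[of "{0..1}" Q] UC by simp
  then obtain P where P: "uniform_limit {0..1} Q P sequentially"
    unfolding uniformly_convergent_on_def by blast
  have cQ: "continuous_on {0..1} (Q k)" for k using P1[of k 0] by (simp add: Q_def path_def)
  have contP: "continuous_on {0..1} P"
    by (rule uniform_limit_theorem[OF _ P]) (simp_all add: cQ)
  have ptw: "(\<lambda>k. Q k t) \<longlonglongrightarrow> P t" if "t \<in> {0..1}" for t
    using tendsto_uniform_limitI[OF P that] .
  have PT: "P t \<in> T" if t: "t \<in> {0..1}" for t
  proof (rule Lim_in_closed_set[OF T _ _ ptw[OF t]])
    have "Q k t \<in> T" for k using P1[of k 0] t by (auto simp: Q_def path_image_def)
    then show "\<forall>\<^sub>F x in sequentially. Q x t \<in> T" by simp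
  qed simp
  have P0: "P 0 = z 0"
  proof -
    have "(\<lambda>k. Q k 0) = (\<lambda>k. z 0)" using P1 by (auto simp: Q_def pathstart_def)
    then have "(\<lambda>k. Q k 0) \<longlonglongrightarrow> z 0" by simp
    then show ?thesis using LIMSEQ_unique[OF ptw[of 0]] by simp
  qed
  have Pone: "P 1 = m"
  proof -
    have "(\<lambda>k. Q k 1) = z" using P1 by (auto simp: Q_def pathfinish_def)
    then have "(\<lambda>k. Q k 1) \<longlonglongrightarrow> m" using zm by simp
    then show ?thesis using LIMSEQ_unique[OF ptw[of 1]] by simp
  qed
  show ?thesis unfolding path_component_def
    apply (rule exI[of _ P])
    using contP PT P0 Pone by (simp add: path_def path_image_def pathstart_def pathfinish_def image_subset_iff)
qed


lemma vec_conv: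
  fixes z :: "nat \<Rightarrow> real ^ 'n" and m :: "real ^ 'n"
  assumes "\<And>k i. \<bar>z k $ i - m $ i\<bar> \<le> 1 / real (Suc k)"
  shows "z \<longlonglongrightarrow> m"
proof -
  have bnd: "norm (z k - m) \<le> real CARD('n) / real (Suc k)" for k
  proof -
    have "norm (z k - m) \<le> sum (\<lambda>i. \<bar>(z k - m) $ i\<bar>) UNIV" by (rule norm_le_l1_cart)
    also have "\<dots> \<le> sum (\<lambda>i. 1 / real (Suc k)) (UNIV::'n set)"
      by (rule sum_mono) (use assms in simp)
    also have "\<dots> = real CARD('n) / real (Suc k)" by simp
    finally show ?thesis .
  qed
  have lim: "(\<lambda>k. real CARD('n) / real (Suc k)) \<longlonglongrightarrow> 0"
    using LIMSEQ_Suc[OF lim_const_over_n[of "real CARD('n)"]] by simp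
  have ev: "\<forall>\<^sub>F k in sequentially. norm (z k - m) \<le> real CARD('n) / real (Suc k)"
    using bnd by simp
  have "(\<lambda>k. z k - m) \<longlonglongrightarrow> 0" by (rule Lim_null_comparison[OF ev lim])
  then show ?thesis by (rule LIM_zero_iff[THEN iffD1])
qed

locale pge =
  fixes u :: "real ^ 'n \<Rightarrow> real ^ 'n" and a :: "real ^ 'n"
  assumes pgu: "public_goods_utility u" and acore: "a \<in> core u"
begin

abbreviation "D \<equiv> dominated_set u a"

lemma u_cube: "x \<in> unit_cube \<Longrightarrow> u x \<in> unit_cube"
  using pgu unfolding public_goods_utility_def by auto

lemma u_cont: "continuous_on unit_cube u"
  using pgu unfolding public_goods_utility_def by auto

lemma u_conc: "concave_on unit_cube (\<lambda>x. u x $ i)"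
  using pgu unfolding public_goods_utility_def by auto

lemma mono_u:
  assumes "x \<in> unit_cube" "y \<in> unit_cube" "\<And>j. y $ j \<le> x $ j" "y $ i = x $ i"
  shows "u y $ i \<le> u x $ i"
proof (cases "y = x")
  case True then show ?thesis by simp
next
  case False
  then obtain j where "y $ j \<noteq> x $ j" by (metis vec_eq_iff)
  with assms(3)[of j] have "y $ j < x $ j" by linarith
  then have "vec_gneq x y" using assms(3) unfolding vec_gneq_def by blast
  moreover have "\<forall>a\<in>unit_cube. \<forall>a'\<in>unit_cube. \<forall>i.
        vec_gneq a a' \<and> a $ i = a' $ i \<longrightarrow> u a' $ i < u a $ i"
    using pgu unfolding public_goods_utility_def by blast
  ultimately have "u y $ i < u x $ i" using assms(1,2,4) by metis
  then show ?thesis by simp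
qed

lemma a_cube: "a \<in> unit_cube" using acore unfolding core_def by auto

lemma no_dev:
  assumes "C \<noteq> {}" "y \<in> unit_cube" "\<And>i. i \<notin> C \<Longrightarrow> y $ i = 0" "\<And>i. i \<in> C \<Longrightarrow> u a $ i < u y $ i"
  shows False
  using acore assms unfolding core_def is_deviation_def by blast

lemma cube_iff: "x \<in> unit_cube \<longleftrightarrow> (\<forall>i. 0 \<le> x $ i \<and> x $ i \<le> 1)"
  unfolding unit_cube_def by simp

lemma D_iff: "x \<in> D \<longleftrightarrow> x \<in> unit_cube \<and> (\<forall>i. u x $ i \<le> u a $ i)"
  unfolding dominated_set_def by simp

lemma vmin_cube: "x \<in> unit_cube \<Longrightarrow> y \<in> unit_cube \<Longrightarrow> vmin x y \<in> unit_cube"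
  unfolding cube_iff by (auto simp: min_def)

lemma vmin_D:
  assumes "x \<in> D" "y \<in> D" shows "vmin x y \<in> D"
proof -
  have xc: "x \<in> unit_cube" and yc: "y \<in> unit_cube" using assms D_iff by auto
  have mc: "vmin x y \<in> unit_cube" using vmin_cube[OF xc yc] .
  have "u (vmin x y) $ i \<le> u a $ i" for i
  proof (cases "x $ i \<le> y $ i")
    case True
    then have "u (vmin x y) $ i \<le> u x $ i"
      by (intro mono_u[OF xc mc]) auto
    then show ?thesis using assms(1) D_iff by (meson order_trans)
  next
    case False
    then have "u (vmin x y) $ i \<le> u y $ i"
      by (intro mono_u[OF yc mc]) auto
    then show ?thesis using assms(2) D_iff by (meson order_trans)
  qed
  then show ?thesis using mc D_iff by auto
qed

lemma closed_cube: "closed (unit_cube :: (real^'n) set)"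
proof -
  have "unit_cube = (\<Inter>i. {x::real^'n. x$i \<le> 1} \<inter> {x. 0 \<le> x $ i})"
    unfolding unit_cube_def by auto
  moreover have "closed {x::real^'n. 0 \<le> x $ i}" for i
    using closed_halfspace_component_ge_cart .
  moreover have "closed (\<Inter>i. {x::real^'n. x$i \<le> 1} \<inter> {x. 0 \<le> x $ i})"
    by (intro closed_INT ballI closed_Int closed_halfspace_component_le_cart closed_halfspace_component_ge_cart)
  ultimately show ?thesis by simp
qed

lemma closed_D: "closed D"
proof -
  have eq: "D = (\<Inter>i. unit_cube \<inter> (\<lambda>x. u x $ i) -` {..u a $ i})"
    unfolding dominated_set_def by auto
  have "closed (unit_cube \<inter> (\<lambda>x. u x $ i) -` {..u a $ i})" for i
    by (rule continuous_closed_preimage[OF _ closed_cube closed_atMost]) (intro continuous_intros u_cont)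
  then have "closed (\<Inter>i. unit_cube \<inter> (\<lambda>x. u x $ i) -` {..u a $ i})"
    by (intro closed_INT ballI)
  then show ?thesis by (subst eq)
qed

lemma pc_vmin:
  assumes "path_component D p q" "b \<in> D"
  shows "path_component D (vmin b p) (vmin b q)"
proof -
  obtain g where g: "path g" "path_image g \<subseteq> D" "pathstart g = p" "pathfinish g = q"
    using assms(1) unfolding path_component_def by blast
  have "path ((\<lambda>y. vmin b y) \<circ> g)"
    by (rule path_continuous_image[OF g(1) continuous_on_vmin])
  moreover have "path_image ((\<lambda>y. vmin b y) \<circ> g) \<subseteq> D"
    using g(2) assms(2) vmin_D by (auto simp: path_image_def)
  ultimately show ?thesis unfolding path_component_def
    using g by (intro exI[of _ "(\<lambda>y. vmin b y) \<circ> g"]) (auto simp: pathstart_def pathfinish_def)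
qed


lemma seg_D:
  assumes "0 \<le> t0" "\<And>s. 0 \<le> s \<Longrightarrow> s \<le> t0 \<Longrightarrow> x - s *\<^sub>R w \<in> D"
  shows "closed_segment x (x - t0 *\<^sub>R w) \<subseteq> D"
proof
  fix y assume "y \<in> closed_segment x (x - t0 *\<^sub>R w)"
  then obtain \<theta> where th: "0 \<le> \<theta>" "\<theta> \<le> 1" "y = (1-\<theta>) *\<^sub>R x + \<theta> *\<^sub>R (x - t0 *\<^sub>R w)"
    by (auto simp: closed_segment_def)
  then have "y = x - (\<theta>*t0) *\<^sub>R w" by (simp add: algebra_simps)
  moreover have "0 \<le> \<theta>*t0" "\<theta>*t0 \<le> t0" using th assms(1) by (auto simp: mult_left_le_one_le)
  ultimately show "y \<in> D" using assms(2) by simp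
qed

lemma descent:
  assumes xD: "x \<in> D" and x0: "x \<noteq> 0"
  shows "\<exists>z. z \<in> D \<and> (\<forall>i. z $ i \<le> x $ i) \<and> z \<noteq> x \<and> path_component D x z"
proof -
  have xc: "x \<in> unit_cube" and xa: "\<And>i. u x $ i \<le> u a $ i" using xD D_iff by auto
  define S where "S = {j. 0 < x $ j}"
  have x_nn: "0 \<le> x $ i" and x_le1: "x $ i \<le> 1" for i using xc cube_iff by auto
  have xS: "i \<notin> S \<Longrightarrow> x $ i = 0" for i using x_nn[of i] S_def by auto
  have Sne: "S \<noteq> {}"
  proof
    assume "S = {}"
    then have "x = 0" using xS by (auto simp: vec_eq_iff)
    then show False using x0 by simp
  qed
  show ?thesis
  proof (cases "\<exists>j\<in>S. u x $ j < u a $ j")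
    case True
    then obtain j where j: "j \<in> S" "u x $ j < u a $ j" by blast
    have "continuous_on unit_cube (\<lambda>y. u y $ j)" by (intro continuous_intros u_cont)
    then obtain \<delta> where \<delta>: "\<delta> > 0" "\<And>y. y \<in> unit_cube \<Longrightarrow> dist y x < \<delta> \<Longrightarrow> dist (u y $ j) (u x $ j) < u a $ j - u x $ j"
      using xc j(2) unfolding continuous_on_iff by (meson diff_gt_0_iff_gt)
    define s where "s = min (\<delta>/2) (x $ j)"
    have s: "0 < s" "s < \<delta>" "s \<le> x $ j" using \<delta> j(1) S_def by (auto simp: s_def)
    have pts: "x - r *\<^sub>R axis j 1 \<in> D" if r: "0 \<le> r" "r \<le> s" for r
    proof -
      let ?y = "x - r *\<^sub>R axis j 1"
      have yi: "?y $ i = (if i = j then x $ i - r else x $ i)" for i by (simp add: axis_def)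
      have "x $ j - r \<le> 1" using x_le1[of j] r by linarith
      then have yc: "?y \<in> unit_cube" using x_nn x_le1 s r unfolding cube_iff yi by auto
      have "dist ?y x = r" using r by (simp add: dist_norm)
      then have "dist (u ?y $ j) (u x $ j) < u a $ j - u x $ j" using \<delta>(2)[OF yc] r s by simp
      then have "u ?y $ j \<le> u a $ j" by (simp add: dist_real_def)
      moreover have "u ?y $ i \<le> u a $ i" if "i \<noteq> j" for i
      proof -
        have "u ?y $ i \<le> u x $ i" by (rule mono_u[OF xc yc]) (use r that in \<open>auto simp: yi axis_def\<close>)
        then show ?thesis using xa[of i] by linarith
      qed
      ultimately show ?thesis using yc D_iff by metis
    qed
    have "closed_segment x (x - s *\<^sub>R axis j 1) \<subseteq> D"
      by (rule seg_D) (use s pts in auto)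
    moreover have "(x - s *\<^sub>R axis j 1) $ j \<noteq> x $ j" using s by (simp add: axis_def)
    then have "x - s *\<^sub>R axis j 1 \<noteq> x" by metis
    moreover have "\<forall>i. (x - s *\<^sub>R axis j 1) $ i \<le> x $ i" using s by (simp add: axis_def)
    ultimately show ?thesis using pts[of s] s
      by (intro exI[of _ "x - s *\<^sub>R axis j 1"]) (auto simp: path_component_linepath)
  next
    case False
    then have tight: "\<And>j. j \<in> S \<Longrightarrow> u x $ j = u a $ j" using xa by (meson not_less order_antisym)
    have finS: "finite S" by simp
    define t0 where "t0 = Min ((\<lambda>j. x $ j) ` S)"
    have t0: "0 < t0" using Sne finS by (auto simp: t0_def S_def)
    have t0le: "\<And>j. j \<in> S \<Longrightarrow> t0 \<le> x $ j" using finS by (auto simp: t0_def)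
    have ptc: "(x - t *\<^sub>R w) $ i = x $ i - t * w $ i" for t w i by simp
    have pt_cube: "x - t *\<^sub>R w \<in> unit_cube" if w: "w \<in> simplexS S" and t: "0 \<le> t" "t \<le> t0" for w t
      unfolding cube_iff
    proof
      fix i
      have w01: "0 \<le> w $ i" "w $ i \<le> 1" using w simplexS_le1 by (auto simp: simplexS_def)
      have "t * w $ i \<le> t" using t w01 by (simp add: mult_right_le_one_le)
      moreover have "0 \<le> t * w $ i" using t w01 by simp
      moreover have "i \<notin> S \<Longrightarrow> w $ i = 0" using w by (simp add: simplexS_def)
      ultimately show "0 \<le> (x - t *\<^sub>R w) $ i \<and> (x - t *\<^sub>R w) $ i \<le> 1"
        using t0le[of i] xS[of i] x_le1[of i] t by (cases "i \<in> S") auto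
    qed
    have pt_le: "(x - t *\<^sub>R w) $ i \<le> x $ i" if "w \<in> simplexS S" "0 \<le> t" for w t i
      using that by (simp add: simplexS_def)
    have pt_out: "(x - t *\<^sub>R w) $ i = x $ i" if "w \<in> simplexS S" "w $ i = 0" for w t i
      using that by simp
    have contu: "continuous_on (simplexS S) (\<lambda>w. u (x - t *\<^sub>R w) $ i)" if "0 \<le> t" "t \<le> t0" for t i
    proof -
      have "continuous_on (simplexS S) (\<lambda>w. u (x - t *\<^sub>R w))"
        by (rule continuous_on_compose2[OF u_cont]) (use pt_cube that in \<open>auto intro!: continuous_intros\<close>)
      then show ?thesis by (intro continuous_intros)
    qed
    have KK: "\<exists>w\<in>simplexS S. \<forall>i\<in>S. u (x - t *\<^sub>R w) $ i < u a $ i + \<epsilon>"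
      if t: "0 < t" "t \<le> t0" and e: "0 < \<epsilon>" for t \<epsilon>
    proof -
      have "\<exists>w\<in>simplexS S. \<forall>i\<in>S. u (x - t *\<^sub>R w) $ i - (u a $ i + \<epsilon>) < 0"
      proof (rule kkm[OF Sne])
        fix i assume "i \<in> S"
        show "continuous_on (simplexS S) (\<lambda>w. u (x - t *\<^sub>R w) $ i - (u a $ i + \<epsilon>))"
        proof -
          have "continuous_on (simplexS S) (\<lambda>w. u (x - t *\<^sub>R w) $ i)" using contu[of t i] t by auto
          then show ?thesis by (intro continuous_on_diff continuous_on_const)
        qed
      next
        fix w i assume w: "w \<in> simplexS S" and i: "i \<in> S" and wi: "w $ i = 0"
        have "u (x - t *\<^sub>R w) $ i \<le> u x $ i"
          by (rule mono_u[OF xc pt_cube[OF w]]) (use t w wi pt_le in auto)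
        then show "u (x - t *\<^sub>R w) $ i - (u a $ i + \<epsilon>) < 0" using xa[of i] e by linarith
      next
        fix w assume w: "w \<in> simplexS S"
        show "\<exists>i\<in>S. u (x - t *\<^sub>R w) $ i - (u a $ i + \<epsilon>) < 0"
        proof (rule ccontr)
          assume "\<not> ?thesis"
          then have ge: "\<And>i. i \<in> S \<Longrightarrow> u a $ i < u (x - t *\<^sub>R w) $ i" using e by force
          have out: "\<And>i. i \<notin> S \<Longrightarrow> (x - t *\<^sub>R w) $ i = 0"
            using w xS by (simp add: simplexS_def)
          show False by (rule no_dev[OF Sne pt_cube[OF w] out ge]) (use t in auto)
        qed
      qed
      then show ?thesis by simp
    qed
    define tk where "tk k = t0 / real (Suc k)" for k
    have tk: "0 < tk k" "tk k \<le> t0" for k using t0 by (auto simp: tk_def divide_le_eq)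
    have "\<forall>k. \<exists>w. w \<in> simplexS S \<and> (\<forall>i\<in>S. u (x - tk k *\<^sub>R w) $ i < u a $ i + tk k / real (Suc k))"
      using KK tk by (metis of_nat_0_less_iff zero_less_Suc divide_pos_pos)
    then obtain W where W: "\<And>k. W k \<in> simplexS S"
      "\<And>k i. i \<in> S \<Longrightarrow> u (x - tk k *\<^sub>R W k) $ i < u a $ i + tk k / real (Suc k)"
      by metis
    obtain l r where lr: "l \<in> simplexS S" "strict_mono r" "(W \<circ> r) \<longlonglongrightarrow> l"
      using compact_imp_seq_compact[OF compact_simplexS] W(1) unfolding seq_compact_def by metis
    have lim: "x - s *\<^sub>R l \<in> D" if s: "0 \<le> s" "s \<le> t0" for s
    proof (cases "s = 0")
      case True then show ?thesis using xD by simp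
    next
      case False
      then have s0: "0 < s" using s by simp
      have "u (x - s *\<^sub>R l) $ i \<le> u a $ i" for i
      proof (cases "i \<in> S")
        case False
        then have "l $ i = 0" using lr(1) by (simp add: simplexS_def)
        then have "u (x - s *\<^sub>R l) $ i \<le> u x $ i"
          by (intro mono_u[OF xc pt_cube[OF lr(1) s]]) (use lr(1) s pt_le in auto)
        then show ?thesis using xa[of i] by linarith
      next
        case True
        have bound: "u (x - s *\<^sub>R W k) $ i \<le> u a $ i + s / real (Suc k)" if k: "tk k \<le> s" for k
        proof -
          define lam where "lam = tk k / s"
          have lam: "0 < lam" "lam \<le> 1" using tk[of k] k s0 by (auto simp: lam_def)
          have ls: "lam * s = tk k" using s0 by (simp add: lam_def)
          have comb: "(1 - lam) *\<^sub>R x + lam *\<^sub>R (x - s *\<^sub>R W k) = x - tk k *\<^sub>R W k"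
            by (simp add: algebra_simps ls[symmetric])
          have "(1 - lam) * u x $ i + lam * u (x - s *\<^sub>R W k) $ i \<le> u ((1 - lam) *\<^sub>R x + lam *\<^sub>R (x - s *\<^sub>R W k)) $ i"
            by (rule concave_onD[OF u_conc]) (use lam xc pt_cube[OF W(1) s] in auto)
          also have "\<dots> < u a $ i + tk k / real (Suc k)" unfolding comb using W(2)[OF True] .
          finally have "lam * (u (x - s *\<^sub>R W k) $ i - u a $ i) < lam * (s / real (Suc k))"
            using tight[OF True] ls by (simp add: algebra_simps)
          then have "u (x - s *\<^sub>R W k) $ i - u a $ i < s / real (Suc k)"
            using mult_less_cancel_left_pos[OF lam(1)] by blast
          then show ?thesis by linarith
        qed
        obtain N where N: "t0 / s < real N" using reals_Archimedean2 by blast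
        have ev: "\<forall>n\<ge>N. u (x - s *\<^sub>R (W \<circ> r) n) $ i \<le> u a $ i + s / real (Suc (r n))"
        proof (intro allI impI)
          fix n assume "N \<le> n"
          then have "N \<le> r n" using seq_suble[OF lr(2), of n] by simp
          then have "t0 / s < real (Suc (r n))" using N by linarith
          then have "t0 < s * real (Suc (r n))" using s0 by (simp add: divide_less_eq mult.commute)
          then have "tk (r n) \<le> s" by (simp add: tk_def divide_le_eq mult.commute)
          then show "u (x - s *\<^sub>R (W \<circ> r) n) $ i \<le> u a $ i + s / real (Suc (r n))"
            using bound by simp
        qed
        have l1: "(\<lambda>n. u (x - s *\<^sub>R (W \<circ> r) n) $ i) \<longlonglongrightarrow> u (x - s *\<^sub>R l) $ i"
          by (rule continuous_on_tendsto_compose[OF contu[OF s] lr(3) lr(1)]) (use W(1) in auto)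
        have "(\<lambda>n. s / real (Suc n)) \<longlonglongrightarrow> 0"
          using LIMSEQ_Suc[OF lim_const_over_n[of s]] by simp
        then have "((\<lambda>n. s / real (Suc n)) \<circ> r) \<longlonglongrightarrow> 0" using LIMSEQ_subseq_LIMSEQ lr(2) by blast
        then have l2: "(\<lambda>n. u a $ i + s / real (Suc (r n))) \<longlonglongrightarrow> u a $ i + 0"
          by (intro tendsto_add tendsto_const) (simp add: comp_def)
        show ?thesis using LIMSEQ_le[OF l1 l2] ev by auto
      qed
      then show ?thesis using pt_cube[OF lr(1) s] D_iff by auto
    qed
    obtain i where li: "l $ i \<noteq> 0" using simplexS_nonzero[OF lr(1)] by blast
    have ne: "x - t0 *\<^sub>R l \<noteq> x"
    proof
      assume "x - t0 *\<^sub>R l = x"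
      then have "t0 = 0 \<or> l = 0" by simp
      then show False using li t0 by auto
    qed
    have "closed_segment x (x - t0 *\<^sub>R l) \<subseteq> D" by (rule seg_D) (use t0 lim in auto)
    then show ?thesis using lim[of t0] t0 ne pt_le[OF lr(1), of t0]
      by (intro exI[of _ "x - t0 *\<^sub>R l"]) (auto simp: path_component_linepath)
  qed
qed


lemma reach0:
  assumes bD: "b \<in> D"
  shows "path_component D b 0"
proof -
  define K where "K = {y. y \<in> D \<and> (\<forall>i. y $ i \<le> b $ i) \<and> path_component D b y}"
  have bK: "b \<in> K" using bD by (auto simp: K_def path_component_refl)
  have K_nn: "0 \<le> y $ i" if "y \<in> K" for y i using that by (auto simp: K_def D_iff cube_iff)
  have vmin_le: "vmin y w = y" if "\<forall>i. y $ i \<le> w $ i" for y w :: "real^'n"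
    using that by (simp add: vec_eq_iff)
  have Kmeet: "vmin y w \<in> K" if y: "y \<in> K" and w: "w \<in> K" for y w
  proof -
    have yD: "y \<in> D" and yb: "\<forall>i. y $ i \<le> b $ i" and py: "path_component D b y" using y by (auto simp: K_def)
    have wD: "w \<in> D" and pw: "path_component D b w" using w by (auto simp: K_def)
    have "path_component D (vmin y b) (vmin y w)" by (rule pc_vmin[OF pw yD])
    then have "path_component D y (vmin y w)" using vmin_le[OF yb] by simp
    then have "path_component D b (vmin y w)" using py path_component_trans by blast
    moreover have "\<forall>i. vmin y w $ i \<le> b $ i" using yb by (auto simp: min_le_iff_disj)
    ultimately show ?thesis using vmin_D[OF yD wD] by (simp add: K_def)
  qed
  define m where "m = (\<chi> i. Inf ((\<lambda>y. y $ i) ` K))"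
  have bddK: "bdd_below ((\<lambda>y. y $ i) ` K)" for i
    by (rule bdd_belowI[where m=0]) (auto intro: K_nn)
  have m_le: "m $ i \<le> y $ i" if "y \<in> K" for y i
    unfolding m_def using that bddK by (auto intro: cInf_lower)
  have approx: "\<exists>c\<in>K. \<forall>i\<in>I. c $ i < m $ i + \<epsilon>" if e: "0 < \<epsilon>" and I: "finite I" for \<epsilon> I
    using I
  proof (induction I rule: finite_induct)
    case empty then show ?case using bK by blast
  next
    case (insert i I)
    then obtain c where c: "c \<in> K" "\<forall>j\<in>I. c $ j < m $ j + \<epsilon>" by blast
    have "Inf ((\<lambda>y. y $ i) ` K) < m $ i + \<epsilon>" using e by (simp add: m_def)
    then obtain y where y: "y \<in> K" "y $ i < m $ i + \<epsilon>" using bK cInf_lessD[of "(\<lambda>y. y $ i) ` K"] by blast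
    show ?case
    proof (intro bexI[of _ "vmin c y"] ballI)
      fix j assume "j \<in> insert i I"
      then show "vmin c y $ j < m $ j + \<epsilon>" using c y by (auto simp: min_less_iff_disj)
    qed (rule Kmeet[OF c(1) y(1)])
  qed
  have "\<forall>k. \<exists>c. c \<in> K \<and> (\<forall>i. c $ i < m $ i + 1 / real (Suc k))"
  proof
    fix k
    have "0 < 1 / real (Suc k)" by simp
    from approx[OF this, of UNIV] show "\<exists>c. c \<in> K \<and> (\<forall>i. c $ i < m $ i + 1 / real (Suc k))" by auto
  qed
  then obtain C where C: "\<And>k. C k \<in> K" "\<And>k i. C k $ i < m $ i + 1 / real (Suc k)" by metis
  define z where "z = rec_nat (C 0) (\<lambda>k zk. vmin zk (C (Suc k)))"
  have z0: "z 0 = C 0" and zS: "z (Suc k) = vmin (z k) (C (Suc k))" for k by (simp_all add: z_def)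
  have zK: "z k \<in> K" for k by (induction k) (simp_all add: z0 zS C(1) Kmeet)
  have zC: "z k $ i \<le> C k $ i" for k i by (cases k) (simp_all add: z0 zS)
  have zb: "\<forall>i. z k $ i \<le> b $ i" for k using zK[of k] by (simp add: K_def)
  have zdec: "\<forall>i. z (Suc k) $ i \<le> z k $ i" for k by (simp add: zS)
  have zm: "z \<longlonglongrightarrow> m"
  proof (rule vec_conv)
    fix k i
    have "m $ i \<le> z k $ i" "z k $ i < m $ i + 1 / real (Suc k)"
      using m_le[OF zK] zC[of k i] C(2)[of k i] by (auto intro: order_le_less_trans)
    then show "\<bar>z k $ i - m $ i\<bar> \<le> 1 / real (Suc k)" by simp
  qed
  have contvv: "continuous_on UNIV (\<lambda>y. vmin c (vmin b y))" for c :: "real^'n"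
    unfolding vmin_def by (intro continuous_intros)
  have "\<forall>k. \<exists>\<gamma>. path \<gamma> \<and> path_image \<gamma> \<subseteq> D \<and> pathstart \<gamma> = b \<and> pathfinish \<gamma> = z (Suc k)"
    using zK unfolding K_def path_component_def by blast
  then obtain \<Gamma> where \<Gamma>: "\<And>k. path (\<Gamma> k)" "\<And>k. path_image (\<Gamma> k) \<subseteq> D"
    "\<And>k. pathstart (\<Gamma> k) = b" "\<And>k. pathfinish (\<Gamma> k) = z (Suc k)" by metis
  define g where "g k = (\<lambda>y. vmin (z k) (vmin b y)) \<circ> \<Gamma> k" for k
  have gp: "path (g k)" for k unfolding g_def
    by (rule path_continuous_image[OF \<Gamma>(1)]) (rule continuous_on_subset[OF contvv], simp)
  have gs: "pathstart (g k) = z k" for k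
    using \<Gamma>(3)[of k] zb[of k] by (simp add: g_def pathstart_def vec_eq_iff min_absorb1 min_absorb2)
  have gf: "pathfinish (g k) = z (Suc k)" for k
  proof -
    have "vmin (z k) (vmin b (z (Suc k))) = z (Suc k)"
      using zb[of "Suc k"] zdec[of k] by (simp add: vec_eq_iff min_absorb1 min_absorb2)
    then show ?thesis using \<Gamma>(4)[of k] by (simp add: g_def pathfinish_def)
  qed
  have GD: "\<Gamma> k t \<in> D" if "t \<in> {0..1}" for k t using \<Gamma>(2)[of k] that by (auto simp: path_image_def)
  have gT: "path_image (g k) \<subseteq> D" for k
  proof
    fix y assume "y \<in> path_image (g k)"
    then obtain t where t: "t \<in> {0..1}" "y = g k t" by (auto simp: path_image_def)
    have zD: "z k \<in> D" using zK[of k] by (simp add: K_def)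
    have "vmin (z k) (vmin b (\<Gamma> k t)) \<in> D" by (intro vmin_D zD bD GD t)
    then show "y \<in> D" using t by (simp add: g_def)
  qed
  have box: "\<forall>i. m $ i \<le> g k t $ i \<and> g k t $ i \<le> z k $ i" if t: "t \<in> {0..1}" for k t
  proof -
    have "path_component D b (\<Gamma> k t)"
    proof -
      have "path_component (path_image (\<Gamma> k)) (pathstart (\<Gamma> k)) (\<Gamma> k t)"
        using path_component_path_image_pathstart[OF \<Gamma>(1)] t by (auto simp: path_image_def)
      then show ?thesis using \<Gamma>(2,3) path_component_of_subset by metis
    qed
    then have "path_component D (vmin b b) (vmin b (\<Gamma> k t))" using pc_vmin bD by blast
    then have "path_component D b (vmin b (\<Gamma> k t))" using vmin_le[of b b] by simp
    then have "vmin b (\<Gamma> k t) \<in> K" using vmin_D[OF bD GD[OF t]] by (simp add: K_def)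
    then have "\<forall>i. m $ i \<le> vmin b (\<Gamma> k t) $ i" using m_le by blast
    then show ?thesis using m_le[OF zK[of k]] by (simp add: g_def)
  qed
  have "path_component D (z 0) m"
    by (rule chain_path[OF closed_D zm gp gs gf gT box])
  then have pbm: "path_component D b m" using zK[of 0] path_component_trans by (auto simp: K_def)
  have mb: "\<forall>i. m $ i \<le> b $ i"
  proof
    fix i
    have "m $ i \<le> z 0 $ i" by (rule m_le[OF zK[of 0]])
    moreover have "z 0 $ i \<le> b $ i" using zb[of 0] by blast
    ultimately show "m $ i \<le> b $ i" by linarith
  qed
  have mK: "m \<in> K"
    using pbm path_component_mem(2)[OF pbm] mb by (simp add: K_def)
  have "m = 0"
  proof (rule ccontr)
    assume "m \<noteq> 0"
    then obtain z' where z': "z' \<in> D" "\<forall>i. z' $ i \<le> m $ i" "z' \<noteq> m" "path_component D m z'"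
      using descent[OF path_component_mem(2)[OF pbm]] by blast
    have "\<forall>i. z' $ i \<le> b $ i"
    proof
      fix i
      have "z' $ i \<le> m $ i" using z'(2) by blast
      moreover have "m $ i \<le> b $ i" using mb by blast
      ultimately show "z' $ i \<le> b $ i" by linarith
    qed
    moreover have "path_component D b z'" using pbm z'(4) by (rule path_component_trans)
    ultimately have "z' \<in> K" using z'(1) by (simp add: K_def)
    then have "\<forall>i. m $ i \<le> z' $ i" using m_le by blast
    then have "z' = m" using z'(2) by (simp add: vec_eq_iff order_antisym)
    then show False using z'(3) by simp
  qed
  then show ?thesis using pbm by simp
qed

end

theorem lemma13:
  fixes u :: "real ^ 'n \<Rightarrow> real ^ 'n" and a :: "real ^ 'n"
  assumes "public_goods_utility u"
    and "a \<in> core u"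
  shows "path_connected (dominated_set u a)"
proof -
  interpret pge u a using assms by unfold_locales
  show ?thesis unfolding path_connected_component
  proof (intro ballI)
    fix x y assume x: "x \<in> dominated_set u a" and y: "y \<in> dominated_set u a"
    have "path_component (dominated_set u a) x 0" by (rule reach0[OF x])
    moreover have "path_component (dominated_set u a) 0 y" by (rule path_component_sym[OF reach0[OF y]])
    ultimately show "path_component (dominated_set u a) x y" by (rule path_component_trans)
  qed
qed

end
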